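(* Let $\Theta$ be a subset of a Polish space with metric $d$, equipped with its Borel $\sigma$-algebra, let $\nu$ be a probability measure on $\Theta$, and let $\{P^\theta:\theta\in\Theta\}$ be probability measures on $(\Omega,\mathcal{F})$ such that $\theta\mapsto P^\theta(A)$ is Borel measurable for each $A\in\mathcal{F}$ and $\theta\mapsto P^\theta$ is continuous in total variation (for every $\theta$ and $\varepsilon>0$ there is $\delta>0$ with $\sup_{A\in\mathcal{F}}|P^\theta(A)-P^{\theta'}(A)|<\varepsilon$ whenever $d(\theta,\theta')<\delta$). Let $\mathbb{P}(A)=\int_\Theta P^\theta(A)\,\nu(\mathrm{d}\theta)$ be the mixture probability measure. Then $\Theta^0:=\{\theta\in\Theta:P^\theta\not\ll\mathbb{P}\}$ is Borel measurable and $\nu(\Theta^0)=0$.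
   Context: $(\Omega,\mathcal{F})$ is a measurable space. *)

theory Defs
  imports "HOL-Probability.Probability"
begin

definition mixture :: "'b measure \<Rightarrow> 'a measure \<Rightarrow> ('a \<Rightarrow> 'b measure) \<Rightarrow> 'b measure" where
  "mixture M \<nu> P = measure_of (space M) (sets M) (\<lambda>A. \<integral>\<^sup>+ \<theta>. emeasure (P \<theta>) A \<partial>\<nu>)"

end

theory Submission
  imports Defs
begin

lemma mixture_facts:
  fixes \<nu> :: "'a measure" and M :: "'b measure" and P :: "'a \<Rightarrow> 'b measure"
  assumes P_sets: "\<And>\<theta>. \<theta> \<in> space \<nu> \<Longrightarrow> sets (P \<theta>) = sets M"
    and P_meas: "\<And>A. A \<in> sets M \<Longrightarrow> (\<lambda>\<theta>. emeasure (P \<theta>) A) \<in> borel_measurable \<nu>"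
  shows "sets (mixture M \<nu> P) = sets M"
    and "\<And>A. A \<in> sets M \<Longrightarrow> emeasure (mixture M \<nu> P) A = (\<integral>\<^sup>+ \<theta>. emeasure (P \<theta>) A \<partial>\<nu>)"
proof -
  show "sets (mixture M \<nu> P) = sets M"
    unfolding mixture_def by (simp add: sets.sigma_sets_eq sets.space_closed)
  fix A assume A: "A \<in> sets M"
  have ca: "countably_additive (sets M) (\<lambda>A. \<integral>\<^sup>+ \<theta>. emeasure (P \<theta>) A \<partial>\<nu>)"
  proof (rule countably_additiveI)
    fix F :: "nat \<Rightarrow> 'b set"
    assume F: "range F \<subseteq> sets M" "disjoint_family F" "\<Union> (range F) \<in> sets M"
    have "(\<Sum>i. \<integral>\<^sup>+ \<theta>. emeasure (P \<theta>) (F i) \<partial>\<nu>) = (\<integral>\<^sup>+ \<theta>. (\<Sum>i. emeasure (P \<theta>) (F i)) \<partial>\<nu>)"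
      using F by (intro nn_integral_suminf[symmetric] P_meas) auto
    also have "\<dots> = (\<integral>\<^sup>+ \<theta>. emeasure (P \<theta>) (\<Union> (range F)) \<partial>\<nu>)"
      by (intro nn_integral_cong suminf_emeasure) (use F P_sets in auto)
    finally show "(\<Sum>i. \<integral>\<^sup>+ \<theta>. emeasure (P \<theta>) (F i) \<partial>\<nu>) = (\<integral>\<^sup>+ \<theta>. emeasure (P \<theta>) (\<Union> (range F)) \<partial>\<nu>)" .
  qed
  show "emeasure (mixture M \<nu> P) A = (\<integral>\<^sup>+ \<theta>. emeasure (P \<theta>) A \<partial>\<nu>)"
    unfolding mixture_def
    by (rule emeasure_measure_of_sigma[OF sets.sigma_algebra_axioms _ ca A])
       (auto simp: positive_def)
qed

theorem lemma6p9:
  fixes \<Theta> :: "'a::polish_space set"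
    and \<nu> :: "'a measure"
    and M :: "'b measure"
    and P :: "'a \<Rightarrow> 'b measure"
  assumes nu_sets: "sets \<nu> = sets (restrict_space borel \<Theta>)"
    and nu_space: "space \<nu> = \<Theta>"
    and nu_prob: "prob_space \<nu>"
    and P_prob: "\<And>\<theta>. \<theta> \<in> \<Theta> \<Longrightarrow> prob_space (P \<theta>)"
    and P_space: "\<And>\<theta>. \<theta> \<in> \<Theta> \<Longrightarrow> space (P \<theta>) = space M"
    and P_sets: "\<And>\<theta>. \<theta> \<in> \<Theta> \<Longrightarrow> sets (P \<theta>) = sets M"
    and P_meas: "\<And>A. A \<in> sets M \<Longrightarrow> (\<lambda>\<theta>. emeasure (P \<theta>) A) \<in> borel_measurable \<nu>"
    and P_tv_cont: "\<forall>\<theta>\<in>\<Theta>. \<forall>\<epsilon>>0. \<exists>\<delta>>0. \<forall>\<theta>'\<in>\<Theta>. dist \<theta> \<theta>' < \<delta> \<longrightarrow>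
        (SUP A\<in>sets M. \<bar>measure (P \<theta>) A - measure (P \<theta>') A\<bar>) < \<epsilon>"
  shows "{\<theta>\<in>\<Theta>. \<not> absolutely_continuous (mixture M \<nu> P) (P \<theta>)} \<in> sets \<nu>
    \<and> emeasure \<nu> {\<theta>\<in>\<Theta>. \<not> absolutely_continuous (mixture M \<nu> P) (P \<theta>)} = 0"
proof -
  let ?mix = "mixture M \<nu> P"
  let ?T0 = "{\<theta>\<in>\<Theta>. \<not> absolutely_continuous ?mix (P \<theta>)}"
  have msets: "sets ?mix = sets M"
    and memb: "\<And>A. A \<in> sets M \<Longrightarrow> emeasure ?mix A = (\<integral>\<^sup>+ \<theta>. emeasure (P \<theta>) A \<partial>\<nu>)"
    using mixture_facts[of \<nu> P M] P_sets P_meas nu_space by auto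
  define N where "N = null_sets ?mix"
  define G where "G = {U. open U \<and> (\<exists>A\<in>N. \<forall>\<theta>\<in>U\<inter>\<Theta>. measure (P \<theta>) A > 0)}"
  have T0_eq: "?T0 = \<Theta> \<inter> \<Union>G"
  proof
    show "?T0 \<subseteq> \<Theta> \<inter> \<Union>G"
    proof
      fix \<theta> assume "\<theta> \<in> ?T0"
      then have th: "\<theta> \<in> \<Theta>" and nac: "\<not> absolutely_continuous ?mix (P \<theta>)" by auto
      then obtain A where AN: "A \<in> N" and AnP: "A \<notin> null_sets (P \<theta>)"
        unfolding absolutely_continuous_def N_def by auto
      have AM: "A \<in> sets M" using AN msets unfolding N_def by auto
      interpret Pt: prob_space "P \<theta>" using P_prob th .
      have pos: "measure (P \<theta>) A > 0"
      proof -
        have "emeasure (P \<theta>) A \<noteq> 0" using AnP AM P_sets[OF th] by auto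
        then have "measure (P \<theta>) A \<noteq> 0" using Pt.emeasure_eq_measure by auto
        then show ?thesis using measure_nonneg[of "P \<theta>" A] by linarith
      qed
      obtain \<delta> where dpos: "\<delta> > 0" and dH: "\<forall>\<theta>'\<in>\<Theta>. dist \<theta> \<theta>' < \<delta> \<longrightarrow>
        (SUP A\<in>sets M. \<bar>measure (P \<theta>) A - measure (P \<theta>') A\<bar>) < measure (P \<theta>) A"
        using P_tv_cont th pos by blast
      have "ball \<theta> \<delta> \<in> G"
        unfolding G_def
      proof (intro CollectI conjI open_ball bexI[OF _ AN] ballI)
        fix \<theta>' assume "\<theta>' \<in> ball \<theta> \<delta> \<inter> \<Theta>"
        then have th': "\<theta>' \<in> \<Theta>" and d: "dist \<theta> \<theta>' < \<delta>" by auto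
        interpret Pt': prob_space "P \<theta>'" using P_prob th' .
        have bdd: "bdd_above ((\<lambda>A. \<bar>measure (P \<theta>) A - measure (P \<theta>') A\<bar>) ` sets M)"
        proof (rule bdd_aboveI[where M=2])
          fix x assume "x \<in> (\<lambda>A. \<bar>measure (P \<theta>) A - measure (P \<theta>') A\<bar>) ` sets M"
          then obtain B where "x = \<bar>measure (P \<theta>) B - measure (P \<theta>') B\<bar>" by auto
          moreover have "measure (P \<theta>) B \<le> 1" "measure (P \<theta>') B \<le> 1"
            "measure (P \<theta>) B \<ge> 0" "measure (P \<theta>') B \<ge> 0"
            by (auto simp: Pt.prob_le_1 Pt'.prob_le_1)
          ultimately show "x \<le> 2" by linarith
        qed
        have "\<bar>measure (P \<theta>) A - measure (P \<theta>') A\<bar> \<le> (SUP A\<in>sets M. \<bar>measure (P \<theta>) A - measure (P \<theta>') A\<bar>)"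
          by (rule cSUP_upper[OF AM bdd])
        also have "\<dots> < measure (P \<theta>) A" using dH th' d by blast
        finally show "measure (P \<theta>') A > 0" by linarith
      qed
      then show "\<theta> \<in> \<Theta> \<inter> \<Union>G" using th dpos by (intro IntI UnionI[of "ball \<theta> \<delta>"]) auto
    qed
  next
    show "\<Theta> \<inter> \<Union>G \<subseteq> ?T0"
    proof
      fix \<theta> assume "\<theta> \<in> \<Theta> \<inter> \<Union>G"
      then obtain U A where th: "\<theta> \<in> \<Theta>" and "\<theta> \<in> U" and AN: "A \<in> N"
        and "\<forall>\<theta>\<in>U\<inter>\<Theta>. measure (P \<theta>) A > 0" unfolding G_def by auto
      then have pos: "measure (P \<theta>) A > 0" by auto
      interpret Pt: prob_space "P \<theta>" using P_prob th .
      have "A \<notin> null_sets (P \<theta>)" using pos Pt.emeasure_eq_measure by auto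
      then show "\<theta> \<in> ?T0" using th AN unfolding N_def absolutely_continuous_def by auto
    qed
  qed
  have openG: "open (\<Union>G)" unfolding G_def by auto
  have meas: "?T0 \<in> sets \<nu>"
    unfolding T0_eq nu_sets sets_restrict_space
    using openG by (auto intro!: imageI borel_open)
  obtain G' where G': "G' \<subseteq> G" "countable G'" "\<Union>G' = \<Union>G"
    using Lindelof[of G] unfolding G_def by auto
  have "\<forall>U\<in>G'. \<exists>A\<in>N. \<forall>\<theta>\<in>U\<inter>\<Theta>. measure (P \<theta>) A > 0" using G' unfolding G_def by auto
  then obtain AU where AU: "\<And>U. U \<in> G' \<Longrightarrow> AU U \<in> N \<and> (\<forall>\<theta>\<in>U\<inter>\<Theta>. measure (P \<theta>) (AU U) > 0)"
    by metis
  define B where "B = (\<Union>U\<in>G'. AU U)"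
  have BN: "B \<in> null_sets ?mix"
    unfolding B_def using AU G'(2) N_def by (intro null_sets_UN') auto
  then have BM: "B \<in> sets M" using msets by auto
  have "(\<integral>\<^sup>+ \<theta>. emeasure (P \<theta>) B \<partial>\<nu>) = 0" using BN memb[OF BM] by auto
  then have AE: "AE \<theta> in \<nu>. emeasure (P \<theta>) B = 0"
    using nn_integral_0_iff_AE[OF P_meas[OF BM]] by auto
  have Zs: "{\<theta>\<in>space \<nu>. emeasure (P \<theta>) B \<noteq> 0} \<in> sets \<nu>"
    using P_meas[OF BM] by measurable
  have Z0: "emeasure \<nu> {\<theta>\<in>space \<nu>. emeasure (P \<theta>) B \<noteq> 0} = 0"
    using AE AE_iff_measurable[OF Zs] by auto
  have sub: "?T0 \<subseteq> {\<theta>\<in>space \<nu>. emeasure (P \<theta>) B \<noteq> 0}"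
  proof
    fix \<theta> assume "\<theta> \<in> ?T0"
    then have th: "\<theta> \<in> \<Theta>" and "\<theta> \<in> \<Union>G'" using T0_eq G' by auto
    then obtain U where U: "U \<in> G'" "\<theta> \<in> U" by auto
    interpret Pt: prob_space "P \<theta>" using P_prob th .
    have pos: "measure (P \<theta>) (AU U) > 0" using AU U th by auto
    have "AU U \<subseteq> B" using U unfolding B_def by auto
    moreover have "AU U \<in> sets (P \<theta>)" using AU U N_def msets P_sets th by auto
    moreover have "B \<in> sets (P \<theta>)" using BM P_sets th by auto
    ultimately have "measure (P \<theta>) (AU U) \<le> measure (P \<theta>) B"
      by (intro Pt.finite_measure_mono)
    then have "measure (P \<theta>) B > 0" using pos by linarith
    then show "\<theta> \<in> {\<theta>\<in>space \<nu>. emeasure (P \<theta>) B \<noteq> 0}"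
      using th nu_space Pt.emeasure_eq_measure by auto
  qed
  have "emeasure \<nu> ?T0 = 0"
    using emeasure_mono[OF sub Zs] Z0 by auto
  then show ?thesis using meas by auto
qed

end
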